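(* Let $\Theta$ be a hypergraph and $p:V(\Theta)\to\mathbb{R}^d$. The framework $(p,\Theta)$ is universally globally Euclideanly rigid if and only if it is universally locally Euclideanly rigid.
   Context: A hypergraph $\Theta$ has a finite vertex set $V$ and hyperedges that are subsets of $V$. In $\mathbb{R}^k$, frameworks $(p,\Theta),(q,\Theta)$ are Euclidean-equivalent if for each hyperedge $h$ some Euclidean isometry $g_h$ of $\mathbb{R}^k$ satisfies $g_h(p(u))=q(u)$ for $u\in h$, and Euclidean-congruent if one isometry $g$ of $\mathbb{R}^k$ satisfies $g(p(u))=q(u)$ for all $u$. A framework is globally Euclideanly rigid in $\mathbb{R}^k$ if every Euclidean-equivalent framework in $\mathbb{R}^k$ is Euclidean-congruent to it, and locally Euclideanly rigid in $\mathbb{R}^k$ if this holds for all equivalent frameworks whose configurations lie in some neighborhood of $p$ in $(\mathbb{R}^k)^V$. Viewing $\mathbb{R}^d\subset\mathbb{R}^{d'}$ ($d'\ge d$) as the first $d$ coordinates, $(p,\Theta)$ is universally globally (resp. locally) Euclideanly rigid if it is globally (resp. locally) Euclideanly rigid in $\mathbb{R}^{d'}$ for every $d'\ge d$. *)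

theory Defs
  imports Main "HOL-Analysis.Analysis"
begin

text \<open>Points of R^k are modelled as functions nat => real whose coordinates
  with index >= k vanish; thus R^d is contained in R^d' (d <= d') as the
  first d coordinates.\<close>

definition inRk :: "nat \<Rightarrow> (nat \<Rightarrow> real) \<Rightarrow> bool" where
  "inRk k x \<longleftrightarrow> (\<forall>i\<ge>k. x i = 0)"

definition edist :: "nat \<Rightarrow> (nat \<Rightarrow> real) \<Rightarrow> (nat \<Rightarrow> real) \<Rightarrow> real" where
  "edist k x y = sqrt (\<Sum>i<k. (x i - y i)^2)"

definition eucl_isometry :: "nat \<Rightarrow> ((nat \<Rightarrow> real) \<Rightarrow> (nat \<Rightarrow> real)) \<Rightarrow> bool" where
  "eucl_isometry k g \<longleftrightarrow>
     (\<forall>x. inRk k x \<longrightarrow> inRk k (g x)) \<and>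
     (\<forall>x y. inRk k x \<longrightarrow> inRk k y \<longrightarrow> edist k (g x) (g y) = edist k x y) \<and>
     (\<forall>y. inRk k y \<longrightarrow> (\<exists>x. inRk k x \<and> g x = y))"

definition hypergraph :: "'v set \<Rightarrow> 'v set set \<Rightarrow> bool" where
  "hypergraph V H \<longleftrightarrow> finite V \<and> (\<forall>h\<in>H. h \<subseteq> V)"

definition config :: "nat \<Rightarrow> 'v set \<Rightarrow> ('v \<Rightarrow> nat \<Rightarrow> real) \<Rightarrow> bool" where
  "config k V q \<longleftrightarrow> (\<forall>u\<in>V. inRk k (q u))"

definition eucl_equivalent ::
  "nat \<Rightarrow> 'v set set \<Rightarrow> ('v \<Rightarrow> nat \<Rightarrow> real) \<Rightarrow> ('v \<Rightarrow> nat \<Rightarrow> real) \<Rightarrow> bool" where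
  "eucl_equivalent k H p q \<longleftrightarrow>
     (\<forall>h\<in>H. \<exists>g. eucl_isometry k g \<and> (\<forall>u\<in>h. g (p u) = q u))"

definition eucl_congruent ::
  "nat \<Rightarrow> 'v set \<Rightarrow> ('v \<Rightarrow> nat \<Rightarrow> real) \<Rightarrow> ('v \<Rightarrow> nat \<Rightarrow> real) \<Rightarrow> bool" where
  "eucl_congruent k V p q \<longleftrightarrow>
     (\<exists>g. eucl_isometry k g \<and> (\<forall>u\<in>V. g (p u) = q u))"

definition glob_rigid ::
  "nat \<Rightarrow> 'v set \<Rightarrow> 'v set set \<Rightarrow> ('v \<Rightarrow> nat \<Rightarrow> real) \<Rightarrow> bool" where
  "glob_rigid k V H p \<longleftrightarrow>
     (\<forall>q. config k V q \<and> eucl_equivalent k H p q \<longrightarrow> eucl_congruent k V p q)"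

definition loc_rigid ::
  "nat \<Rightarrow> 'v set \<Rightarrow> 'v set set \<Rightarrow> ('v \<Rightarrow> nat \<Rightarrow> real) \<Rightarrow> bool" where
  "loc_rigid k V H p \<longleftrightarrow>
     (\<exists>e>0. \<forall>q. config k V q \<and> (\<forall>u\<in>V. edist k (q u) (p u) < e) \<and>
               eucl_equivalent k H p q \<longrightarrow> eucl_congruent k V p q)"

definition univ_glob_rigid ::
  "nat \<Rightarrow> 'v set \<Rightarrow> 'v set set \<Rightarrow> ('v \<Rightarrow> nat \<Rightarrow> real) \<Rightarrow> bool" where
  "univ_glob_rigid d V H p \<longleftrightarrow> (\<forall>d'\<ge>d. glob_rigid d' V H p)"

definition univ_loc_rigid ::
  "nat \<Rightarrow> 'v set \<Rightarrow> 'v set set \<Rightarrow> ('v \<Rightarrow> nat \<Rightarrow> real) \<Rightarrow> bool" where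
  "univ_loc_rigid d V H p \<longleftrightarrow> (\<forall>d'\<ge>d. loc_rigid d' V H p)"

end

theory Submission
  imports Defs
begin

definition sqd :: "nat \<Rightarrow> (nat \<Rightarrow> real) \<Rightarrow> (nat \<Rightarrow> real) \<Rightarrow> real" where
  "sqd k x y = (\<Sum>i<k. (x i - y i)^2)"

lemma edist_sqd: "edist k x y = sqrt (sqd k x y)" by (simp add: edist_def sqd_def)
lemma sqd_nonneg: "sqd k x y \<ge> 0" by (simp add: sqd_def sum_nonneg)
lemma edist_eq_iff: "edist k x y = edist k x' y' \<longleftrightarrow> sqd k x y = sqd k x' y'"
  by (simp add: edist_sqd)
lemma sqd_sym: "sqd k x y = sqd k y x" by (simp add: sqd_def power2_commute)
lemma edist_sym: "edist k x y = edist k y x" by (simp add: edist_sqd sqd_sym)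

lemma sqd_zero: assumes "inRk k x" "inRk k y" "sqd k x y = 0" shows "x = y"
proof
  fix i show "x i = y i"
  proof (cases "i < k")
    case True
    have "(x i - y i)^2 = 0"
      using assms(3) sum_nonneg_eq_0_iff[of "{..<k}" "\<lambda>i. (x i - y i)^2"] True
      unfolding sqd_def by auto
    then show ?thesis by simp
  next
    case False then show ?thesis using assms(1,2) by (simp add: inRk_def)
  qed
qed

lemma iso_id: "eucl_isometry k id" by (auto simp: eucl_isometry_def)

lemma iso_comp: assumes "eucl_isometry k f" "eucl_isometry k g" shows "eucl_isometry k (f \<circ> g)"
  using assms unfolding eucl_isometry_def comp_def by metis

lemma sum_sq_expand:
  fixes A B :: "nat \<Rightarrow> real" shows "(\<Sum>i\<in>I. (A i - c * B i)^2) = (\<Sum>i\<in>I. (A i)^2) - 2*c*(\<Sum>i\<in>I. A i * B i) + c^2*(\<Sum>i\<in>I. (B i)^2)"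
proof -
  have "(\<Sum>i\<in>I. (A i - c * B i)^2) = (\<Sum>i\<in>I. (A i)^2 - 2*c*(A i * B i) + c^2*(B i)^2)"
    by (rule sum.cong) (auto simp: power2_eq_square algebra_simps)
  also have "\<dots> = (\<Sum>i\<in>I. (A i)^2) - 2*c*(\<Sum>i\<in>I. A i * B i) + c^2*(\<Sum>i\<in>I. (B i)^2)"
    by (simp add: sum.distrib sum_subtractf sum_distrib_left)
  finally show ?thesis .
qed

definition SS :: "nat \<Rightarrow> (nat\<Rightarrow>real) \<Rightarrow> (nat\<Rightarrow>real) \<Rightarrow> (nat\<Rightarrow>real) \<Rightarrow> real" where
  "SS k a b z = (\<Sum>j<k. (z j - (a j + b j)/2) * (b j - a j))"

definition refl_map :: "nat \<Rightarrow> (nat\<Rightarrow>real) \<Rightarrow> (nat\<Rightarrow>real) \<Rightarrow> (nat\<Rightarrow>real) \<Rightarrow> (nat\<Rightarrow>real)" where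
  "refl_map k a b z = (\<lambda>i. z i - (2 * SS k a b z / sqd k b a) * (b i - a i))"

lemma refl_dist: "sqd k (refl_map k a b z) (refl_map k a b w) = sqd k z w"
proof -
  define N where "N = sqd k b a"
  define c where "c = 2 * SS k a b z / N - 2 * SS k a b w / N"
  define P where "P = (\<Sum>j<k. (z j - w j) * (b j - a j))"
  have N: "N = (\<Sum>j<k. (b j - a j)^2)" by (simp add: N_def sqd_def)
  have cP: "c = 2 * P / N"
  proof -
    have "SS k a b z - SS k a b w = P"
      unfolding SS_def P_def sum_subtractf[symmetric] by (rule sum.cong) (auto simp: algebra_simps)
    then show ?thesis unfolding c_def by (simp add: diff_divide_distrib[symmetric])
  qed
  have "sqd k (refl_map k a b z) (refl_map k a b w) = (\<Sum>i<k. ((z i - w i) - c * (b i - a i))^2)"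
    unfolding sqd_def refl_map_def c_def N_def by (rule sum.cong) (auto simp: algebra_simps)
  also have "\<dots> = sqd k z w - 2*c*P + c^2 * N"
    unfolding sum_sq_expand sqd_def P_def N by simp
  moreover have "- 2*c*P + c^2 * N = 0"
  proof (cases "N = 0")
    case True then show ?thesis using N sum_nonneg_eq_0_iff[of "{..<k}" "\<lambda>j. (b j - a j)^2"]
      by (simp add: cP)
  next
    case False then show ?thesis by (simp add: cP power2_eq_square field_simps)
  qed
  ultimately show ?thesis by simp
qed

lemma refl_invol: assumes "sqd k b a \<noteq> 0" shows "refl_map k a b (refl_map k a b z) = z"
proof -
  define N where "N = sqd k b a"
  have N: "N = (\<Sum>j<k. (b j - a j)*(b j - a j))" by (simp add: N_def sqd_def power2_eq_square)
  define cz where "cz = 2 * SS k a b z / N"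
  have "SS k a b (refl_map k a b z) = (\<Sum>j<k. (z j - (a j + b j)/2) * (b j - a j) - cz * ((b j - a j)*(b j - a j)))"
    unfolding SS_def refl_map_def cz_def N_def by (rule sum.cong) (auto simp: algebra_simps)
  also have "\<dots> = SS k a b z - cz * N"
    by (simp add: sum_subtractf sum_distrib_left SS_def N)
  also have "\<dots> = - SS k a b z" using assms by (simp add: cz_def N_def)
  finally have e: "SS k a b (refl_map k a b z) = - SS k a b z" .
  show ?thesis unfolding refl_map_def[of k a b "refl_map k a b z"] e
    by (rule ext) (simp add: refl_map_def)
qed

lemma refl_swap: assumes "sqd k b a \<noteq> 0" shows "refl_map k a b a = b"
proof -
  have "SS k a b a = (\<Sum>j<k. (- ((b j - a j)^2)) / 2)"
    unfolding SS_def by (rule sum.cong) (auto simp: power2_eq_square field_simps)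
  also have "\<dots> = - sqd k b a / 2"
    unfolding sqd_def sum_divide_distrib[symmetric] sum_negf by simp
  finally have "SS k a b a = - sqd k b a / 2" .
  then show ?thesis using assms by (auto simp: refl_map_def)
qed

lemma refl_fix: assumes "sqd k z a = sqd k z b" shows "refl_map k a b z = z"
proof -
  have "sqd k z a - sqd k z b = 2 * SS k a b z"
    unfolding SS_def sqd_def sum_subtractf[symmetric] sum_distrib_left
    by (rule sum.cong) (auto simp: power2_eq_square field_simps)
  then have "SS k a b z = 0" using assms by simp
  then show ?thesis by (simp add: refl_map_def)
qed

lemma refl_iso: assumes "inRk k a" "inRk k b" "a \<noteq> b" shows "eucl_isometry k (refl_map k a b)"
proof -
  have N: "sqd k b a \<noteq> 0" using sqd_zero[OF assms(2,1)] assms(3) by auto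
  have inr: "inRk k (refl_map k a b x)" if "inRk k x" for x
    using that assms(1,2) by (auto simp: inRk_def refl_map_def)
  show ?thesis unfolding eucl_isometry_def
  proof (intro conjI allI impI)
    fix x assume "inRk k x" then show "inRk k (refl_map k a b x)" by (rule inr)
  next
    fix x y show "edist k (refl_map k a b x) (refl_map k a b y) = edist k x y"
      by (simp add: edist_sqd refl_dist)
  next
    fix y assume "inRk k y"
    then show "\<exists>x. inRk k x \<and> refl_map k a b x = y"
      using inr refl_invol[OF N] by blast
  qed
qed

lemma iso_sqd: "eucl_isometry k g \<Longrightarrow> inRk k x \<Longrightarrow> inRk k y \<Longrightarrow> sqd k (g x) (g y) = sqd k x y"
  unfolding eucl_isometry_def by (metis edist_eq_iff)

lemma iso_inRk: "eucl_isometry k g \<Longrightarrow> inRk k x \<Longrightarrow> inRk k (g x)"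
  unfolding eucl_isometry_def by blast

lemma extension:
  fixes S :: "'v set"
  assumes "finite S" "\<forall>u\<in>S. inRk k (x u) \<and> inRk k (y u)"
    "\<forall>u\<in>S. \<forall>v\<in>S. sqd k (x u) (x v) = sqd k (y u) (y v)"
  shows "\<exists>g. eucl_isometry k g \<and> (\<forall>u\<in>S. g (x u) = y u)"
  using assms
proof (induction S rule: finite_induct)
  case empty then show ?case using iso_id by blast
next
  case (insert w S)
  then obtain g where g: "eucl_isometry k g" "\<forall>u\<in>S. g (x u) = y u" by auto
  define a where "a = g (x w)"
  define b where "b = y w"
  have ia: "inRk k a" unfolding a_def using iso_inRk[OF g(1)] insert.prems by auto
  have ib: "inRk k b" unfolding b_def using insert.prems by auto
  show ?case
  proof (cases "a = b")
    case True then show ?thesis using g a_def b_def by auto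
  next
    case False
    define f where "f = refl_map k a b \<circ> g"
    have N: "sqd k b a \<noteq> 0" using sqd_zero[OF ib ia] False by auto
    have "eucl_isometry k f" unfolding f_def by (rule iso_comp[OF refl_iso[OF ia ib False] g(1)])
    moreover have "f (x w) = y w" using refl_swap[OF N] by (simp add: f_def a_def b_def)
    moreover have "f (x u) = y u" if u: "u \<in> S" for u
    proof -
      have "sqd k (y u) a = sqd k (x u) (x w)" unfolding a_def using g u insert.prems
        by (metis insertCI iso_sqd)
      also have "\<dots> = sqd k (y u) b" unfolding b_def using insert.prems u by auto
      finally show ?thesis using refl_fix g(2) u by (simp add: f_def)
    qed
    ultimately show ?thesis by auto
  qed
qed

definition RR :: "nat \<Rightarrow> real \<Rightarrow> real \<Rightarrow> (nat\<Rightarrow>real) \<Rightarrow> (nat\<Rightarrow>real) \<Rightarrow> (nat\<Rightarrow>real)" where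
  "RR n c s x x' = (\<lambda>i. if i < n then c * x i else if i < 2*n then s * x' (i - n) else 0)"

lemma sqd_RR: "sqd (2*n) (RR n c s x x') (RR n c s y y') = c^2 * sqd n x y + s^2 * sqd n x' y'"
proof -
  let ?f = "\<lambda>i. (RR n c s x x' i - RR n c s y y' i)^2"
  have "sqd (2*n) (RR n c s x x') (RR n c s y y') = sum ?f {0..<n} + sum ?f {n..<n+n}"
    unfolding sqd_def by (simp add: sum.atLeastLessThan_concat lessThan_atLeast0 mult_2)
  also have "sum ?f {0..<n} = c^2 * sqd n x y"
    unfolding sqd_def sum_distrib_left lessThan_atLeast0
    by (rule sum.cong) (auto simp: RR_def power2_eq_square algebra_simps)
  also have "sum ?f {n..<n+n} = sum (?f \<circ> plus n) {0..<n}"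
    using sum.atLeastLessThan_shift_bounds[of ?f 0 n n] by (simp add: add.commute)
  also have "\<dots> = s^2 * sqd n x' y'"
    unfolding sqd_def sum_distrib_left lessThan_atLeast0
    by (rule sum.cong) (auto simp: RR_def power2_eq_square algebra_simps)
  finally show ?thesis .
qed

lemma sqd_mono: assumes "inRk n x" "inRk n y" "n \<le> k" shows "sqd k x y = sqd n x y"
  unfolding sqd_def
  by (rule sum.mono_neutral_right) (use assms in \<open>auto simp: inRk_def\<close>)

lemma inRk_mono: "inRk n x \<Longrightarrow> n \<le> k \<Longrightarrow> inRk k x"
  by (auto simp: inRk_def)

theorem lemma2p11:
  fixes V :: "'v set" and H :: "'v set set" and p :: "'v \<Rightarrow> nat \<Rightarrow> real" and d :: nat
  assumes "hypergraph V H" and "config d V p"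
  shows "univ_glob_rigid d V H p \<longleftrightarrow> univ_loc_rigid d V H p"
proof
  assume "univ_glob_rigid d V H p"
  then show "univ_loc_rigid d V H p"
    unfolding univ_glob_rigid_def univ_loc_rigid_def loc_rigid_def glob_rigid_def
    using zero_less_one by blast
next
  assume L: "univ_loc_rigid d V H p"
  show "univ_glob_rigid d V H p" unfolding univ_glob_rigid_def glob_rigid_def
  proof (intro allI impI)
    fix d' q assume dd: "d \<le> d'" and Q: "config d' V q \<and> eucl_equivalent d' H p q"
    have fin: "finite V" and hsub: "\<forall>h\<in>H. h \<subseteq> V" using assms(1) by (auto simp: hypergraph_def)
    have pin: "\<forall>u\<in>V. inRk d' (p u)" using assms(2) dd inRk_mono by (auto simp: config_def)
    have qin: "\<forall>u\<in>V. inRk d' (q u)" using Q by (auto simp: config_def)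
    define k where "k = 2*d'"
    have pink: "\<forall>u\<in>V. inRk k (p u)" using pin inRk_mono by (auto simp: k_def)
    have "loc_rigid k V H p" using L dd by (auto simp: univ_loc_rigid_def k_def)
    then obtain e where e: "e>0" "\<forall>r. config k V r \<and> (\<forall>u\<in>V. edist k (r u) (p u) < e) \<and>
               eucl_equivalent k H p r \<longrightarrow> eucl_congruent k V p r"
      by (auto simp: loc_rigid_def)
    define r where "r t = (\<lambda>u. RR d' (cos t) (sin t) (p u) (q u))" for t
    have lim: "((\<lambda>t. edist k (r t u) (p u)) \<longlongrightarrow> 0) (at 0)" if u: "u \<in> V" for u
    proof -
      have ci: "((\<lambda>t. r t u i) \<longlongrightarrow> r 0 u i) (at 0)" for i
        by (cases "i < d'"; cases "i < 2*d'") (auto simp: r_def RR_def intro!: tendsto_eq_intros)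
      have z: "(\<Sum>i<k. (r 0 u i - p u i)^2) = 0"
        using pin u by (auto intro!: sum.neutral simp: r_def RR_def inRk_def)
      have "((\<lambda>t. sqrt (\<Sum>i<k. (r t u i - p u i)^2)) \<longlongrightarrow> sqrt (\<Sum>i<k. (r 0 u i - p u i)^2)) (at 0)"
        by (intro tendsto_intros ci)
      then show ?thesis using z by (simp add: edist_def)
    qed
    have "\<forall>\<^sub>F t in at 0. \<forall>u\<in>V. edist k (r t u) (p u) < e"
      using fin lim e(1) by (auto intro!: eventually_ball_finite order_tendstoD)
    then obtain \<delta> where \<delta>: "\<delta> > 0" "\<And>t. 0 < dist t 0 \<Longrightarrow> dist t 0 < \<delta> \<Longrightarrow> \<forall>u\<in>V. edist k (r t u) (p u) < e"
      unfolding eventually_at by auto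
    define t where "t = min (\<delta>/2) (1/2::real)"
    have t: "0 < t" "t < 1" "\<forall>u\<in>V. edist k (r t u) (p u) < e"
      using \<delta> by (auto simp: t_def)
    have sinpos: "sin t > 0" using t pi_gt3 by (intro sin_gt_zero) auto
    have cfg: "config k V (r t)" by (auto simp: config_def inRk_def r_def RR_def k_def)
    have sqr: "sqd k (r t u) (r t v) = (cos t)^2 * sqd d' (p u) (p v) + (sin t)^2 * sqd d' (q u) (q v)" for u v
      unfolding r_def k_def by (rule sqd_RR)
    have pk: "sqd k (p u) (p v) = sqd d' (p u) (p v)" if "u \<in> V" "v \<in> V" for u v
      using sqd_mono pin that by (auto simp: k_def)
    have equiv: "eucl_equivalent k H p (r t)" unfolding eucl_equivalent_def
    proof
      fix h assume h: "h \<in> H"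
      then have hV: "h \<subseteq> V" using hsub by auto
      obtain g where g: "eucl_isometry d' g" "\<forall>u\<in>h. g (p u) = q u"
        using Q h by (auto simp: eucl_equivalent_def)
      have qq: "sqd d' (q u) (q v) = sqd d' (p u) (p v)" if "u \<in> h" "v \<in> h" for u v
        using iso_sqd[OF g(1)] g(2) pin that hV by (metis subsetD)
      show "\<exists>g. eucl_isometry k g \<and> (\<forall>u\<in>h. g (p u) = r t u)"
      proof (rule extension)
        show "finite h" using fin hV finite_subset by blast
        show "\<forall>u\<in>h. inRk k (p u) \<and> inRk k (r t u)" using pink hV cfg by (auto simp: config_def)
        show "\<forall>u\<in>h. \<forall>v\<in>h. sqd k (p u) (p v) = sqd k (r t u) (r t v)"
        proof (intro ballI)
          fix u v assume uv: "u \<in> h" "v \<in> h"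
          have "(cos t)^2 + (sin t)^2 = 1" by simp
          then show "sqd k (p u) (p v) = sqd k (r t u) (r t v)"
            using uv hV pk qq sqr by (metis distrib_right mult_1 subsetD)
        qed
      qed
    qed
    then obtain G where G: "eucl_isometry k G" "\<forall>u\<in>V. G (p u) = r t u"
      using e(2) cfg t(3) by (auto simp: eucl_congruent_def)
    have qq: "sqd d' (p u) (p v) = sqd d' (q u) (q v)" if uv: "u \<in> V" "v \<in> V" for u v
    proof -
      have "sqd k (r t u) (r t v) = sqd k (p u) (p v)"
        using iso_sqd[OF G(1)] G(2) pink uv by metis
      then have "(cos t)^2 * sqd d' (p u) (p v) + (sin t)^2 * sqd d' (q u) (q v) = sqd d' (p u) (p v)"
        using sqr pk uv by simp
      then have "(sin t)^2 * (sqd d' (q u) (q v) - sqd d' (p u) (p v)) = 0"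
        using cos_squared_eq[of t] by (simp add: algebra_simps)
      then show ?thesis using sinpos by simp
    qed
    show "eucl_congruent d' V p q" unfolding eucl_congruent_def
      by (rule extension) (use fin pin qin qq in auto)
  qed
qed

end
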